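(* Let $R$ be a commutative ring with $1$ and let $H_1,\dots,H_m$ be hyperplanes in $R^n$, where $H_i$ is the zero set of $(\mathbf a^i,\mathbf x)-b_i=a^i_1x_1+\dots+a^i_nx_n-b_i$ with $a^i_j,b_i\in R$. Suppose every vertex of the unit cube $\{0,1\}^n\subseteq R^n$ other than $\mathbf 0$ lies in at least one $H_i$. If $\prod_{i=1}^m b_i\neq 0$, then $m\ge n$. *)

theory Defs
  imports Main
begin

end

theory Submission
  imports Defs
begin

definition aff :: "nat set \<Rightarrow> ((nat \<Rightarrow> 'r::comm_ring_1) \<times> 'r) \<Rightarrow> 'r" where
  "aff S f = (\<Sum>j\<in>S. fst f j) + snd f"

definition P :: "nat set \<Rightarrow> ((nat \<Rightarrow> 'r::comm_ring_1) \<times> 'r) list \<Rightarrow> 'r" where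
  "P S fs = prod_list (map (aff S) fs)"

definition shift :: "nat \<Rightarrow> ((nat \<Rightarrow> 'r::comm_ring_1) \<times> 'r) \<Rightarrow> ((nat \<Rightarrow> 'r) \<times> 'r)" where
  "shift j f = (fst f, snd f + fst f j)"

lemma aff_insert: "finite S \<Longrightarrow> j \<notin> S \<Longrightarrow> aff (insert j S) f = aff S (shift j f)"
  by (simp add: aff_def shift_def algebra_simps)

lemma P_insert: "finite S \<Longrightarrow> j \<notin> S \<Longrightarrow> P (insert j S) fs = P S (map (shift j) fs)"
  unfolding P_def by (induction fs) (simp_all add: aff_insert)

lemma sum_Pow_containing:
  assumes "finite T" "j \<in> T"
  shows "(\<Sum>S\<in>{S\<in>Pow T. j \<in> S}. h S) = (\<Sum>S\<in>Pow (T - {j}). h (insert j S))"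
proof -
  have inj: "inj_on (insert j) (Pow (T - {j}))"
    by (rule inj_onI) (auto simp: insert_ident)
  have img: "insert j ` Pow (T - {j}) = {S\<in>Pow T. j \<in> S}"
  proof
    show "insert j ` Pow (T - {j}) \<subseteq> {S \<in> Pow T. j \<in> S}" using assms by auto
    show "{S \<in> Pow T. j \<in> S} \<subseteq> insert j ` Pow (T - {j})"
    proof
      fix S assume "S \<in> {S \<in> Pow T. j \<in> S}"
      then have "S = insert j (S - {j})" "S - {j} \<in> Pow (T - {j})" by auto
      then show "S \<in> insert j ` Pow (T - {j})" by blast
    qed
  qed
  show ?thesis using sum.reindex[OF inj, of h] img by simp
qed

lemma alt_zero_base:
  assumes "finite T" "T \<noteq> {}"
  shows "(\<Sum>S\<in>Pow T. (-1::'r::comm_ring_1) ^ card S) = 0"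
proof -
  obtain t where t: "t \<in> T" using assms by auto
  have "(\<Sum>S\<in>Pow T. (-1::'r) ^ card S) = (\<Sum>S\<in>{S\<in>Pow T. t \<in> S}. (-1::'r) ^ card S) + (\<Sum>S\<in>{S\<in>Pow T. t \<notin> S}. (-1::'r) ^ card S)"
  proof -
    have eq: "Pow T = {S\<in>Pow T. t \<in> S} \<union> {S\<in>Pow T. t \<notin> S}" by blast
    show ?thesis by (subst eq, rule sum.union_disjoint) (use assms in auto)
  qed
  also have "{S\<in>Pow T. t \<notin> S} = Pow (T - {t})" by auto
  also have "(\<Sum>S\<in>{S\<in>Pow T. t \<in> S}. (-1::'r) ^ card S) = (\<Sum>S\<in>Pow (T - {t}). (-1::'r) ^ card (insert t S))"
    using sum_Pow_containing[OF assms(1) t] .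
  also have "\<dots> = (\<Sum>S\<in>Pow (T - {t}). - ((-1::'r) ^ card S))"
  proof (rule sum.cong)
    fix S assume "S \<in> Pow (T - {t})"
    then have "finite S" "t \<notin> S" using assms(1) finite_subset by auto
    then show "(-1::'r) ^ card (insert t S) = - ((-1) ^ card S)" by simp
  qed simp
  finally show ?thesis by (simp add: sum_negf)
qed

lemma alt_zero:
  "\<forall>fs T. length fs = k \<longrightarrow> finite T \<longrightarrow> k < card T \<longrightarrow>
     (\<Sum>S\<in>Pow T. (-1::'r::comm_ring_1) ^ card S * P S fs) = 0"
proof (induction k)
  case 0
  show ?case
  proof (intro allI impI)
    fix fs :: "((nat \<Rightarrow> 'r) \<times> 'r) list" and T :: "nat set"
    assume "length fs = 0" "finite T" "0 < card T"
    then have "fs = []" "T \<noteq> {}" by auto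
    then show "(\<Sum>S\<in>Pow T. (-1::'r) ^ card S * P S fs) = 0"
      using alt_zero_base[OF \<open>finite T\<close>] by (simp add: P_def)
  qed
next
  case (Suc k)
  show ?case
  proof (intro allI impI)
    fix fs :: "((nat \<Rightarrow> 'r) \<times> 'r) list" and T :: "nat set"
    assume len: "length fs = Suc k" and fin: "finite T" and cardT: "Suc k < card T"
    obtain f gs where fs: "fs = f # gs" using len by (cases fs) auto
    have lg: "length gs = k" using len fs by simp
    obtain c d where f: "f = (c, d)" by fastforce
    have IHd: "(\<Sum>S\<in>Pow T. (-1::'r) ^ card S * P S gs) = 0"
      using Suc.IH[rule_format, OF lg fin] cardT by simp
    have inner: "(\<Sum>S\<in>{S\<in>Pow T. j \<in> S}. (-1::'r) ^ card S * P S gs) = 0" if j: "j \<in> T" for j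
    proof -
      have "(\<Sum>S\<in>{S\<in>Pow T. j \<in> S}. (-1::'r) ^ card S * P S gs)
          = (\<Sum>S\<in>Pow (T - {j}). (-1::'r) ^ card (insert j S) * P (insert j S) gs)"
        using sum_Pow_containing[OF fin j] .
      also have "\<dots> = (\<Sum>S\<in>Pow (T - {j}). - ((-1::'r) ^ card S * P S (map (shift j) gs)))"
      proof (rule sum.cong)
        fix S assume "S \<in> Pow (T - {j})"
        then have "finite S" "j \<notin> S" using fin finite_subset by auto
        then show "(-1::'r) ^ card (insert j S) * P (insert j S) gs = - ((-1) ^ card S * P S (map (shift j) gs))"
          by (simp add: P_insert)
      qed simp
      also have "\<dots> = - (\<Sum>S\<in>Pow (T - {j}). (-1::'r) ^ card S * P S (map (shift j) gs))"
        by (simp add: sum_negf)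
      also have "(\<Sum>S\<in>Pow (T - {j}). (-1::'r) ^ card S * P S (map (shift j) gs)) = 0"
        using Suc.IH[rule_format, of "map (shift j) gs" "T - {j}"] lg fin cardT j
        by (simp add: card_Diff_singleton)
      finally show ?thesis by simp
    qed
    have "(\<Sum>S\<in>Pow T. (-1::'r) ^ card S * P S fs)
        = (\<Sum>S\<in>Pow T. (\<Sum>j\<in>{j\<in>T. j \<in> S}. c j * ((-1::'r) ^ card S * P S gs))) + d * (\<Sum>S\<in>Pow T. (-1::'r) ^ card S * P S gs)"
    proof -
      have "(\<Sum>S\<in>Pow T. (-1::'r) ^ card S * P S fs) = (\<Sum>S\<in>Pow T. (\<Sum>j\<in>{j\<in>T. j \<in> S}. c j * ((-1::'r) ^ card S * P S gs)) + d * ((-1::'r) ^ card S * P S gs))"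
      proof (rule sum.cong)
        fix S assume "S \<in> Pow T"
        then have "{j\<in>T. j \<in> S} = S" by auto
        then show "(-1::'r) ^ card S * P S fs = (\<Sum>j\<in>{j\<in>T. j \<in> S}. c j * ((-1::'r) ^ card S * P S gs)) + d * ((-1::'r) ^ card S * P S gs)"
          by (simp add: fs f P_def aff_def sum_distrib_right[symmetric] algebra_simps)
      qed simp
      then show ?thesis by (simp add: sum.distrib sum_distrib_left)
    qed
    also have "(\<Sum>S\<in>Pow T. (\<Sum>j\<in>{j\<in>T. j \<in> S}. c j * ((-1::'r) ^ card S * P S gs)))
        = (\<Sum>j\<in>T. (\<Sum>S\<in>{S\<in>Pow T. j \<in> S}. c j * ((-1::'r) ^ card S * P S gs)))"
      by (rule sum.swap_restrict) (simp_all add: fin)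
    also have "\<dots> = (\<Sum>j\<in>T. c j * (\<Sum>S\<in>{S\<in>Pow T. j \<in> S}. (-1::'r) ^ card S * P S gs))"
      by (simp add: sum_distrib_left)
    also have "\<dots> = 0" using inner by simp
    finally show "(\<Sum>S\<in>Pow T. (-1::'r) ^ card S * P S fs) = 0" using IHd by simp
  qed
qed

lemma prod_list_zero_mem: "(0::'a::comm_semiring_1) \<in> set xs \<Longrightarrow> prod_list xs = 0"
  by (induction xs) auto

lemma P_empty: "P {} (map (\<lambda>i. (a i, - b i)) [0..<m]) = (\<Prod>i<m. - (b i::'r::comm_ring_1))"
  unfolding P_def by (induction m) (simp_all add: aff_def)

lemma neg1_sq: "(-1::'a::comm_ring_1) ^ m * (-1) ^ m = 1"
  by (simp flip: power_mult_distrib)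

theorem theorem6:
  fixes a :: "nat \<Rightarrow> nat \<Rightarrow> 'r::comm_ring_1"
    and b :: "nat \<Rightarrow> 'r"
    and m n :: nat
  assumes cover: "\<And>v :: nat \<Rightarrow> 'r. (\<forall>j<n. v j = 0 \<or> v j = 1) \<Longrightarrow> (\<exists>j<n. v j \<noteq> 0)
             \<Longrightarrow> (\<exists>i<m. (\<Sum>j<n. a i j * v j) - b i = 0)"
    and prod_nz: "(\<Prod>i<m. b i) \<noteq> 0"
  shows "m \<ge> n"
proof (rule ccontr)
  assume "\<not> m \<ge> n"
  then have mn: "m < n" by simp
  define fs where "fs = map (\<lambda>i. (a i, - b i)) [0..<m]"
  have zero: "(\<Sum>S\<in>Pow {..<n}. (-1::'r) ^ card S * P S fs) = 0"
    using alt_zero[of m, rule_format, of fs "{..<n}"] mn by (simp add: fs_def)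
  have other: "(-1::'r) ^ card S * P S fs = 0" if S: "S \<in> Pow {..<n} - {{}}" for S
  proof -
    define v where "v = (\<lambda>j. if j \<in> S then (1::'r) else 0)"
    have "\<exists>j<n. v j \<noteq> 0" using S by (auto simp: v_def)
    moreover have "\<forall>j<n. v j = 0 \<or> v j = 1" by (simp add: v_def)
    ultimately obtain i where i: "i < m" "(\<Sum>j<n. a i j * v j) - b i = 0"
      using cover[of v] by blast
    have "(\<Sum>j<n. a i j * v j) = (\<Sum>j\<in>S. a i j)"
    proof -
      have "(\<Sum>j<n. a i j * v j) = (\<Sum>j\<in>{..<n}. if j \<in> S then a i j else 0)"
        by (rule sum.cong) (auto simp: v_def)
      also have "\<dots> = (\<Sum>j\<in>{..<n} \<inter> S. a i j)" by (simp add: sum.inter_restrict)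
      also have "{..<n} \<inter> S = S" using S by auto
      finally show ?thesis .
    qed
    then have "aff S (a i, - b i) = 0" using i by (simp add: aff_def)
    then have "P S fs = 0" using i unfolding P_def fs_def
      by (intro prod_list_zero_mem) force
    then show ?thesis by simp
  qed
  have fin: "finite (Pow {..<n::nat})" by simp
  have "(\<Sum>S\<in>Pow {..<n}. (-1::'r) ^ card S * P S fs)
      = (-1::'r) ^ card ({}::nat set) * P {} fs + (\<Sum>S\<in>Pow {..<n} - {{}}. (-1::'r) ^ card S * P S fs)"
    using sum.remove[OF fin, of "{}" "\<lambda>S. (-1::'r) ^ card S * P S fs"] by simp
  also have "(\<Sum>S\<in>Pow {..<n} - {{}}. (-1::'r) ^ card S * P S fs) = 0"
    using other by (intro sum.neutral) blast
  also have "P {} fs = (\<Prod>i<m. - b i)"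
    unfolding fs_def by (rule P_empty)
  also have "(\<Prod>i<m. - b i) = (-1) ^ m * (\<Prod>i<m. b i)"
  proof -
    have "(\<Prod>i<m. - b i) = (\<Prod>i<m. (-1) * b i)" by simp
    also have "\<dots> = (\<Prod>i<m. -1) * (\<Prod>i<m. b i)" by (rule prod.distrib)
    finally show ?thesis by simp
  qed
  finally have "(-1::'r) ^ m * (\<Prod>i<m. b i) = 0" using zero by (simp only: card.empty power_0 mult_1 add_0_right)
  then have "(-1::'r) ^ m * ((-1::'r) ^ m * (\<Prod>i<m. b i)) = 0" by simp
  moreover have "(-1::'r) ^ m * (-1::'r) ^ m = 1"
    by (rule neg1_sq)
  ultimately have "(\<Prod>i<m. b i) = 0" by (metis mult.assoc mult_1)
  then show False using prod_nz by simp
qed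

end
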